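(* With $a(p)=\sqrt{\lambda_0-2\Gamma(p)}$, one has $\Xi_\mu(\lambda_0,0)\le0$ if and only if $$\int_{p_0}^0a(p)\Big(\int_{p_0}^p\frac{ds}{a^3(s)}\Big)^2dp\le\frac{\sigma}{g^2}.$$
   Context: Setting: - $g>0$, $\sigma>0$, and $p_0<p_1<0$. - $\gamma=\gamma_1$ on $[p_0,p_1)$ and $\gamma=\gamma_2$ on $(p_1,0]$, with $\gamma_1\in C^\alpha([p_0,p_1])$ and $\gamma_2\in C^\alpha([p_1,0])$. - $\Gamma(p)=\int_0^p\gamma$, and $a(p;\lambda)=\sqrt{\lambda-2\Gamma(p)}$. - $\mathfrak z(\cdot;\lambda,\mu)$ solves $(a^3\mathfrak z')'-\mu a\mathfrak z=0$ on $(p_0,0)$ with $\mathfrak z(p_0)=0$, $\mathfrak z'(p_0)=1$. - $\Xi(\lambda,\mu):=\lambda^{3/2}\mathfrak z'(0;\lambda,\mu)-(g+\sigma\mu)\mathfrak z(0;\lambda,\mu)$. - $\lambda_0$ is the unique $\lambda>2\max\Gamma$ with $\frac1g=\int_{p_0}^0a(p;\lambda)^{-3}dp$. *)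

theory Defs
  imports "HOL-Analysis.Analysis"
begin

definition holder_on :: "real \<Rightarrow> real set \<Rightarrow> (real \<Rightarrow> real) \<Rightarrow> bool" where
  "holder_on \<alpha> S f \<longleftrightarrow> (\<exists>C. \<forall>x\<in>S. \<forall>y\<in>S. \<bar>f x - f y\<bar> \<le> C * \<bar>x - y\<bar> powr \<alpha>)"

definition Gam :: "(real \<Rightarrow> real) \<Rightarrow> real \<Rightarrow> real" where
  "Gam \<gamma> p = (if p \<le> 0 then - integral {p..0} \<gamma> else integral {0..p} \<gamma>)"

definition aa :: "(real \<Rightarrow> real) \<Rightarrow> real \<Rightarrow> real \<Rightarrow> real" where
  "aa \<gamma> lam p = sqrt (lam - 2 * Gam \<gamma> p)"

definition solves_ivp ::
  "(real \<Rightarrow> real) \<Rightarrow> real \<Rightarrow> real \<Rightarrow> real \<Rightarrow> (real \<Rightarrow> real) \<Rightarrow> (real \<Rightarrow> real) \<Rightarrow> bool" where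
  "solves_ivp \<gamma> lam \<mu> p0 z zd \<longleftrightarrow>
     (\<forall>p\<in>{p0..0}. (z has_real_derivative zd p) (at p within {p0..0})) \<and>
     (\<forall>p\<in>{p0..0}. ((\<lambda>q. (aa \<gamma> lam q)^3 * zd q) has_real_derivative
                        (\<mu> * aa \<gamma> lam p * z p)) (at p within {p0..0})) \<and>
     z p0 = 0 \<and> zd p0 = 1"

end

theory Submission imports Defs begin

lemma holder_cont:
  assumes h: "holder_on \<alpha> S f" and a: "0 < \<alpha>"
  shows "continuous_on S f"
proof -
  obtain C where C: "\<forall>x\<in>S. \<forall>y\<in>S. \<bar>f x - f y\<bar> \<le> C * \<bar>x - y\<bar> powr \<alpha>"
    using h unfolding holder_on_def by blast
  show ?thesis unfolding continuous_on_def
  proof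
    fix x assume x: "x \<in> S"
    have "((\<lambda>y. f y - f x) \<longlongrightarrow> 0) (at x within S)"
    proof (rule Lim_null_comparison)
      show "\<forall>\<^sub>F y in at x within S. norm (f y - f x) \<le> C * \<bar>y - x\<bar> powr \<alpha>"
        using C x by (auto simp: eventually_at_filter)
      have "((\<lambda>y. \<bar>y - x\<bar> powr \<alpha>) \<longlongrightarrow> 0) (at x within S)"
        by (rule tendsto_zero_powrI) (auto intro!: tendsto_eq_intros a)
      then show "((\<lambda>y. C * \<bar>y - x\<bar> powr \<alpha>) \<longlongrightarrow> 0) (at x within S)"
        using tendsto_mult_right_zero by blast
    qed
    then show "(f \<longlongrightarrow> f x) (at x within S)" by (rule LIM_zero_cancel)
  qed
qed

lemma cont_bound:
  fixes f :: "real \<Rightarrow> real"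
  assumes "continuous_on {a..b} f"
  shows "\<exists>M\<ge>0. \<forall>x\<in>{a..b}. \<bar>f x\<bar> \<le> M"
proof -
  have "bounded (f ` {a..b})"
    by (intro compact_imp_bounded compact_continuous_image assms) auto
  then obtain M where "M > 0" "\<forall>y\<in>f ` {a..b}. norm y \<le> M" by (auto simp: bounded_pos)
  then show ?thesis by (intro exI[of _ M]) auto
qed

lemma cont_max:
  fixes f :: "real \<Rightarrow> real"
  assumes "continuous_on {a..b} f" "a \<le> b"
  shows "\<exists>m\<in>{a..b}. \<forall>x\<in>{a..b}. \<bar>f x\<bar> \<le> \<bar>f m\<bar>"
proof -
  have "continuous_on {a..b} (\<lambda>x. \<bar>f x\<bar>)" by (intro continuous_intros assms)
  from continuous_attains_sup[OF _ _ this] assms(2) show ?thesis by auto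
qed

lemma deriv_cont:
  assumes "\<forall>p\<in>S. (f has_real_derivative f' p) (at p within S)"
  shows "continuous_on S f"
  using assms continuous_on_eq_continuous_within DERIV_continuous by blast

lemma ftc_sub:
  fixes f :: "real \<Rightarrow> real"
  assumes "\<forall>p\<in>{p0..0}. (f has_real_derivative f' p) (at p within {p0..0})"
    and "p \<in> {p0..0}"
  shows "(f' has_integral (f p - f p0)) {p0..p}"
proof (rule fundamental_theorem_of_calculus)
  show "p0 \<le> p" using assms by auto
  fix x assume x: "x \<in> {p0..p}"
  have "(f has_real_derivative f' x) (at x within {p0..0})" using assms x by auto
  then have "(f has_real_derivative f' x) (at x within {p0..p})"
    by (rule has_field_derivative_subset) (use assms in auto)
  then show "(f has_vector_derivative f' x) (at x within {p0..p})"
    by (simp add: has_real_derivative_iff_has_vector_derivative)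
qed

theorem mainTheorem9:
  fixes g \<sigma> p0 p1 \<alpha> lam0 :: real
    and \<gamma> \<gamma>1 \<gamma>2 :: "real \<Rightarrow> real"
    and z zd :: "real \<Rightarrow> real \<Rightarrow> real"
  assumes g: "g > 0" and \<sigma>: "\<sigma> > 0"
    and p: "p0 < p1" "p1 < 0"
    and \<alpha>: "0 < \<alpha>" "\<alpha> < 1"
    and \<gamma>1: "\<forall>p\<in>{p0..<p1}. \<gamma> p = \<gamma>1 p" and \<gamma>2: "\<forall>p\<in>{p1<..0}. \<gamma> p = \<gamma>2 p"
    and h1: "holder_on \<alpha> {p0..p1} \<gamma>1" and h2: "holder_on \<alpha> {p1..0} \<gamma>2"
    and lam0: "lam0 > 2 * (SUP p\<in>{p0..0}. Gam \<gamma> p)"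
    and lam0_eq: "1 / g = integral {p0..0} (\<lambda>p. 1 / (aa \<gamma> lam0 p)^3)"
    and sol: "\<forall>\<mu>. solves_ivp \<gamma> lam0 \<mu> p0 (z \<mu>) (zd \<mu>)"
  shows "\<exists>D. ((\<lambda>\<mu>. lam0 powr (3/2) * zd \<mu> 0 - (g + \<sigma> * \<mu>) * z \<mu> 0)
                 has_real_derivative D) (at 0) \<and>
             (D \<le> 0 \<longleftrightarrow>
               integral {p0..0} (\<lambda>p. aa \<gamma> lam0 p *
                   (integral {p0..p} (\<lambda>s. 1 / (aa \<gamma> lam0 s)^3))^2) \<le> \<sigma> / g^2)"
proof -
  define a where "a = aa \<gamma> lam0"
  define A where "A = (\<lambda>p. a p ^ 3)"
  define B where "B = (\<lambda>p. 1 / a p ^ 3)"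
  have p0: "p0 < 0" using p by simp
  have c1: "continuous_on {p0..p1} \<gamma>1" using holder_cont h1 \<alpha> by blast
  have c2: "continuous_on {p1..0} \<gamma>2" using holder_cont h2 \<alpha> by blast
  have i1: "\<gamma> integrable_on {p0..p1}"
    by (rule integrable_spike_finite[where S="{p1}" and f="\<gamma>1"]) (use \<gamma>1 integrable_continuous_interval[OF c1] in auto)
  have i2: "\<gamma> integrable_on {p1..0}"
    by (rule integrable_spike_finite[where S="{p1}" and f="\<gamma>2"]) (use \<gamma>2 integrable_continuous_interval[OF c2] in auto)
  have i\<gamma>: "\<gamma> integrable_on {p0..0}"
    using Henstock_Kurzweil_Integration.integrable_combine[OF _ _ i1 i2] p by auto
  have cG: "continuous_on {p0..0} (Gam \<gamma>)"
  proof -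
    have "continuous_on {p0..0} (\<lambda>x. - integral {x..0} \<gamma>)"
      using indefinite_integral_continuous_1'[OF i\<gamma>] by (intro continuous_intros)
    then show ?thesis by (rule continuous_on_eq) (auto simp: Gam_def)
  qed
  have bdd: "bdd_above (Gam \<gamma> ` {p0..0})"
    by (intro bounded_imp_bdd_above compact_imp_bounded compact_continuous_image cG) auto
  have Gle: "lam0 - 2 * Gam \<gamma> p > 0" if "p \<in> {p0..0}" for p
    using cSUP_upper[OF that bdd] lam0 by linarith
  have G0: "Gam \<gamma> 0 = 0" by (simp add: Gam_def)
  have lam0pos: "lam0 > 0" using Gle[of 0] p0 G0 by simp
  have apos: "a p > 0" if "p \<in> {p0..0}" for p using Gle[OF that] by (simp add: a_def aa_def)
  have ca: "continuous_on {p0..0} a" unfolding a_def aa_def by (intro continuous_intros cG)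
  have cA: "continuous_on {p0..0} A" unfolding A_def by (intro continuous_intros ca)
  have cB: "continuous_on {p0..0} B" unfolding B_def
    by (intro continuous_intros ca) (use apos in force)
  have Apos: "A p > 0" if "p \<in> {p0..0}" for p using apos[OF that] by (simp add: A_def)
  have A0: "lam0 powr (3/2) = A 0"
  proof -
    have "A 0 = (lam0 powr (1/2)) ^ 3" using lam0pos by (simp add: A_def a_def aa_def G0 powr_half_sqrt)
    also have "\<dots> = (lam0 powr (1/2)) powr (real 3)" using lam0pos by (simp add: powr_realpow)
    also have "\<dots> = lam0 powr (3/2)" by (simp add: powr_powr)
    finally show ?thesis by simp
  qed
  obtain Ka where Ka: "Ka \<ge> 0" "\<forall>x\<in>{p0..0}. \<bar>a x\<bar> \<le> Ka" using cont_bound[OF ca] by blast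
  obtain KB where KB: "KB \<ge> 0" "\<forall>x\<in>{p0..0}. \<bar>B x\<bar> \<le> KB" using cont_bound[OF cB] by blast
  define L where "L = - p0"
  have L: "L > 0" using p0 by (simp add: L_def)
  have sol': "\<And>\<mu>. (\<forall>p\<in>{p0..0}. (z \<mu> has_real_derivative zd \<mu> p) (at p within {p0..0}))"
     "\<And>\<mu>. (\<forall>p\<in>{p0..0}. ((\<lambda>q. A q * zd \<mu> q) has_real_derivative
                        (\<mu> * a p * z \<mu> p)) (at p within {p0..0}))"
     "\<And>\<mu>. z \<mu> p0 = 0" "\<And>\<mu>. zd \<mu> p0 = 1"
    using sol unfolding solves_ivp_def a_def[symmetric] A_def by auto
  define F where "F = (\<lambda>\<mu> p. integral {p0..p} (\<lambda>q. a q * z \<mu> q))"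
  have cz: "continuous_on {p0..0} (z \<mu>)" for \<mu> using deriv_cont[OF sol'(1)] .
  have caz: "continuous_on {p0..0} (\<lambda>q. a q * z \<mu> q)" for \<mu> by (intro continuous_intros ca cz)
  have cF: "continuous_on {p0..0} (F \<mu>)" for \<mu>
    unfolding F_def by (rule indefinite_integral_continuous_1[OF integrable_continuous_interval[OF caz]])
  have key1: "A p * zd \<mu> p = A p0 + \<mu> * F \<mu> p" if pp: "p \<in> {p0..0}" for \<mu> p
  proof -
    have "((\<lambda>q. \<mu> * a q * z \<mu> q) has_integral (A p * zd \<mu> p - A p0 * zd \<mu> p0)) {p0..p}"
      using ftc_sub[OF sol'(2) pp] .
    then have "((\<lambda>q. \<mu> * (a q * z \<mu> q)) has_integral (A p * zd \<mu> p - A p0)) {p0..p}"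
      using sol'(4) by (simp add: mult.assoc)
    then have "integral {p0..p} (\<lambda>q. \<mu> * (a q * z \<mu> q)) = A p * zd \<mu> p - A p0"
      by (rule integral_unique)
    then show ?thesis by (simp add: F_def)
  qed
  have zd_eq: "zd \<mu> p = B p * (A p0 + \<mu> * F \<mu> p)" if pp: "p \<in> {p0..0}" for \<mu> p
    using key1[OF pp, of \<mu>] Apos[OF pp] by (simp add: B_def A_def field_simps)
  have zint: "(zd \<mu> has_integral z \<mu> p) {p0..p}" if pp: "p \<in> {p0..0}" for \<mu> p
    using ftc_sub[OF sol'(1) pp] sol'(3) by simp
  have cBF: "continuous_on {p0..0} (\<lambda>q. B q * F \<mu> q)" for \<mu> by (intro continuous_intros cB cF)
  have zdiff: "z \<mu> p - z 0 p = \<mu> * integral {p0..p} (\<lambda>q. B q * F \<mu> q)" if pp: "p \<in> {p0..0}" for \<mu> p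
  proof -
    have "((\<lambda>q. zd \<mu> q - zd 0 q) has_integral (z \<mu> p - z 0 p)) {p0..p}"
      by (intro has_integral_diff zint pp)
    moreover have "((\<lambda>q. zd \<mu> q - zd 0 q) has_integral (\<mu> * integral {p0..p} (\<lambda>q. B q * F \<mu> q))) {p0..p}"
    proof -
      have sub: "{p0..p} \<subseteq> {p0..0}" using pp by auto
      have "((\<lambda>q. B q * F \<mu> q) has_integral integral {p0..p} (\<lambda>q. B q * F \<mu> q)) {p0..p}"
        by (intro integrable_integral integrable_continuous_interval continuous_on_subset[OF cBF sub])
      then have "((\<lambda>q. \<mu> * (B q * F \<mu> q)) has_integral (\<mu> * integral {p0..p} (\<lambda>q. B q * F \<mu> q))) {p0..p}"
        by (rule has_integral_mult_right)
      then show ?thesis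
        by (rule has_integral_eq[rotated]) (use sub in \<open>auto simp: zd_eq algebra_simps\<close>)
    qed
    ultimately show ?thesis by (rule has_integral_unique)
  qed
  have sub0: "{p0..q} \<subseteq> {p0..0}" if "q \<in> {p0..0}" for q using that by auto
  have ibound: "\<bar>integral {p0..q} f\<bar> \<le> K * L"
    if cf: "continuous_on {p0..0} f" and q: "q \<in> {p0..0}" and fb: "\<forall>x\<in>{p0..0}. \<bar>f x\<bar> \<le> K" for f :: "real \<Rightarrow> real" and K q
  proof -
    have K: "K \<ge> 0" using fb p0 by force
    have "norm (integral {p0..q} f) \<le> K * (q - p0)"
      by (rule integral_bound) (use q fb in \<open>auto intro: continuous_on_subset[OF cf sub0[OF q]]\<close>)
    also have "\<dots> \<le> K * L" using q K by (intro mult_left_mono) (auto simp: L_def)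
    finally show ?thesis by simp
  qed
  have iint: "integral {p0..q} f - integral {p0..q} h = integral {p0..q} (\<lambda>x. f x - h x)"
    if "continuous_on {p0..0} f" "continuous_on {p0..0} h" "q \<in> {p0..0}" for f h :: "real \<Rightarrow> real" and q
    using integral_diff[OF integrable_continuous_interval[OF continuous_on_subset[OF that(1) sub0[OF that(3)]]]
        integrable_continuous_interval[OF continuous_on_subset[OF that(2) sub0[OF that(3)]]]] by simp
  define K where "K = KB * (Ka * L) * L"
  have K: "K \<ge> 0" using KB Ka L by (simp add: K_def)
  have zdb: "\<bar>z \<mu> p - z 0 p\<bar> \<le> \<bar>\<mu>\<bar> * (K * M)"
    if pp: "p \<in> {p0..0}" and Mb: "\<forall>x\<in>{p0..0}. \<bar>z \<mu> x\<bar> \<le> M" for \<mu> p M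
  proof -
    have Fb: "\<forall>x\<in>{p0..0}. \<bar>F \<mu> x\<bar> \<le> Ka * M * L"
    proof
      fix x assume x: "x \<in> {p0..0}"
      have "\<forall>y\<in>{p0..0}. \<bar>a y * z \<mu> y\<bar> \<le> Ka * M"
        using Ka Mb by (auto simp: abs_mult intro!: mult_mono)
      from ibound[OF caz x this] show "\<bar>F \<mu> x\<bar> \<le> Ka * M * L" by (simp add: F_def)
    qed
    have "\<forall>y\<in>{p0..0}. \<bar>B y * F \<mu> y\<bar> \<le> KB * (Ka * M * L)"
      using KB Fb by (auto simp: abs_mult intro!: mult_mono)
    from ibound[OF cBF pp this]
    have "\<bar>integral {p0..p} (\<lambda>q. B q * F \<mu> q)\<bar> \<le> K * M" by (simp add: K_def algebra_simps)
    then show ?thesis unfolding zdiff[OF pp] abs_mult by (intro mult_left_mono) auto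
  qed
  obtain M0 where M0: "M0 \<ge> 0" "\<forall>x\<in>{p0..0}. \<bar>z 0 x\<bar> \<le> M0" using cont_bound[OF cz] by blast
  define C where "C = K * (2 * M0)"
  have C: "C \<ge> 0" using K M0 by (simp add: C_def)
  have zclose: "\<bar>z \<mu> p - z 0 p\<bar> \<le> \<bar>\<mu>\<bar> * C"
    if sm: "\<bar>\<mu>\<bar> * K \<le> 1/2" and pp: "p \<in> {p0..0}" for \<mu> p
  proof -
    obtain m where m: "m \<in> {p0..0}" "\<forall>x\<in>{p0..0}. \<bar>z \<mu> x\<bar> \<le> \<bar>z \<mu> m\<bar>"
      using cont_max[OF cz] p0 by force
    define M where "M = \<bar>z \<mu> m\<bar>"
    have Mb: "\<forall>x\<in>{p0..0}. \<bar>z \<mu> x\<bar> \<le> M" using m by (simp add: M_def)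
    have "M \<le> \<bar>z 0 m\<bar> + \<bar>\<mu>\<bar> * (K * M)"
      using zdb[OF m(1) Mb] unfolding M_def by linarith
    also have "\<dots> \<le> M0 + M / 2"
    proof -
      have "\<bar>\<mu>\<bar> * (K * M) = (\<bar>\<mu>\<bar> * K) * M" by simp
      also have "\<dots> \<le> 1/2 * M" using sm by (intro mult_right_mono) (auto simp: M_def)
      finally show ?thesis using M0 m by force
    qed
    finally have "M \<le> 2 * M0" by simp
    then have "\<bar>\<mu>\<bar> * (K * M) \<le> \<bar>\<mu>\<bar> * C" unfolding C_def
      by (intro mult_left_mono) (use K in auto)
    then show ?thesis using zdb[OF pp Mb] by linarith
  qed
  define G where "G = (\<lambda>\<mu>. integral {p0..0} (\<lambda>q. B q * F \<mu> q))"
  define Q where "Q = (\<lambda>\<mu>. F \<mu> 0 - g * G \<mu> - \<sigma> * z \<mu> 0)"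
  define Xi where "Xi = (\<lambda>\<mu>. lam0 powr (3/2) * zd \<mu> 0 - (g + \<sigma> * \<mu>) * z \<mu> 0)"
  have end0: "(0::real) \<in> {p0..0}" using p0 by simp
  have Xid: "Xi \<mu> - Xi 0 = Q \<mu> * (\<mu> - 0)" for \<mu>
  proof -
    have e1: "A 0 * zd \<mu> 0 = A p0 + \<mu> * F \<mu> 0" by (rule key1[OF end0])
    have e0: "A 0 * zd 0 0 = A p0" using key1[OF end0, of 0] by simp
    have e2: "z \<mu> 0 = z 0 0 + \<mu> * G \<mu>" using zdiff[OF end0, of \<mu>] by (simp add: G_def)
    show ?thesis unfolding Xi_def Q_def A0 e1 e0 unfolding e2 by (simp add: algebra_simps)
  qed
  have Fclose: "\<bar>F \<mu> q - F 0 q\<bar> \<le> \<bar>\<mu>\<bar> * C * Ka * L"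
    if sm: "\<bar>\<mu>\<bar> * K \<le> 1/2" and q: "q \<in> {p0..0}" for \<mu> q
  proof -
    have "F \<mu> q - F 0 q = integral {p0..q} (\<lambda>s. a s * z \<mu> s - a s * z 0 s)"
      unfolding F_def by (rule iint[OF caz caz q])
    also have "\<dots> = integral {p0..q} (\<lambda>s. a s * (z \<mu> s - z 0 s))" by (simp add: algebra_simps)
    finally have eq: "F \<mu> q - F 0 q = integral {p0..q} (\<lambda>s. a s * (z \<mu> s - z 0 s))" .
    have "\<forall>y\<in>{p0..0}. \<bar>a y * (z \<mu> y - z 0 y)\<bar> \<le> Ka * (\<bar>\<mu>\<bar> * C)"
      using Ka zclose[OF sm] by (auto simp: abs_mult intro!: mult_mono)
    from ibound[OF _ q this] show ?thesis unfolding eq by (simp add: algebra_simps continuous_intros ca cz)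
  qed
  define C2 where "C2 = C * Ka * L + g * (KB * (C * Ka * L) * L) + \<sigma> * C"
  have Qclose: "\<bar>Q \<mu> - Q 0\<bar> \<le> \<bar>\<mu>\<bar> * C2" if sm: "\<bar>\<mu>\<bar> * K \<le> 1/2" for \<mu>
  proof -
    have cBF': "continuous_on {p0..0} (\<lambda>q. B q * (F \<mu> q - F 0 q))" by (intro continuous_intros cB cF)
    have "G \<mu> - G 0 = integral {p0..0} (\<lambda>q. B q * F \<mu> q - B q * F 0 q)"
      unfolding G_def by (rule iint[OF cBF cBF end0])
    also have "\<dots> = integral {p0..0} (\<lambda>q. B q * (F \<mu> q - F 0 q))" by (simp add: algebra_simps)
    finally have eq: "G \<mu> - G 0 = \<dots>" .
    have "\<forall>y\<in>{p0..0}. \<bar>B y * (F \<mu> y - F 0 y)\<bar> \<le> KB * (\<bar>\<mu>\<bar> * C * Ka * L)"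
      using KB Fclose[OF sm] by (auto simp: abs_mult intro!: mult_mono)
    from ibound[OF cBF' end0 this] have Gb: "\<bar>G \<mu> - G 0\<bar> \<le> \<bar>\<mu>\<bar> * (KB * (C * Ka * L) * L)"
      unfolding eq by (simp add: algebra_simps)
    have Fb: "\<bar>F \<mu> 0 - F 0 0\<bar> \<le> \<bar>\<mu>\<bar> * (C * Ka * L)" using Fclose[OF sm end0] by (simp add: algebra_simps)
    have zb: "\<bar>z \<mu> 0 - z 0 0\<bar> \<le> \<bar>\<mu>\<bar> * C" using zclose[OF sm end0] .
    have "Q \<mu> - Q 0 = (F \<mu> 0 - F 0 0) - g * (G \<mu> - G 0) - \<sigma> * (z \<mu> 0 - z 0 0)"
      by (simp add: Q_def algebra_simps)
    also have "\<bar>\<dots>\<bar> \<le> \<bar>F \<mu> 0 - F 0 0\<bar> + g * \<bar>G \<mu> - G 0\<bar> + \<sigma> * \<bar>z \<mu> 0 - z 0 0\<bar>"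
    proof -
      have t: "\<bar>X - U - V\<bar> \<le> \<bar>X\<bar> + \<bar>U\<bar> + \<bar>V\<bar>" for X U V :: real by arith
      show ?thesis using t[of "F \<mu> 0 - F 0 0" "g * (G \<mu> - G 0)" "\<sigma> * (z \<mu> 0 - z 0 0)"] g \<sigma>
        by (simp add: abs_mult)
    qed
    also have "\<dots> \<le> \<bar>\<mu>\<bar> * (C * Ka * L) + g * (\<bar>\<mu>\<bar> * (KB * (C * Ka * L) * L)) + \<sigma> * (\<bar>\<mu>\<bar> * C)"
      using Fb Gb zb g \<sigma> by (intro add_mono mult_left_mono) auto
    also have "\<dots> = \<bar>\<mu>\<bar> * C2" by (simp add: C2_def algebra_simps)
    finally show ?thesis .
  qed
  have evt: "\<forall>\<^sub>F \<mu> in at 0. norm (Q \<mu> - Q 0) \<le> \<bar>\<mu>\<bar> * C2"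
  proof -
    have "\<forall>\<mu>\<in>UNIV. \<mu> \<noteq> 0 \<and> dist \<mu> 0 < 1/(2*K+1) \<longrightarrow> norm (Q \<mu> - Q 0) \<le> \<bar>\<mu>\<bar> * C2"
    proof (intro ballI impI)
      fix \<mu> :: real assume h: "\<mu> \<noteq> 0 \<and> dist \<mu> 0 < 1/(2*K+1)"
      have "\<bar>\<mu>\<bar> * (2*K+1) < 1" using h K by (simp add: field_simps dist_real_def)
      then have "\<bar>\<mu>\<bar> * K \<le> 1/2" using K abs_ge_zero[of \<mu>] by (simp add: algebra_simps)
      then show "norm (Q \<mu> - Q 0) \<le> \<bar>\<mu>\<bar> * C2" using Qclose by simp
    qed
    moreover have "1/(2*K+1) > 0" using K by simp
    ultimately show ?thesis unfolding eventually_at by blast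
  qed
  have "((\<lambda>\<mu>. Q \<mu> - Q 0) \<longlongrightarrow> 0) (at 0)"
    by (rule Lim_null_comparison[OF evt]) (auto intro!: tendsto_eq_intros)
  then have isQ: "isCont Q 0" unfolding isCont_def by (rule LIM_zero_cancel)
  have der: "(Xi has_real_derivative Q 0) (at 0)" unfolding CARAT_DERIV using Xid isQ by blast
  define I where "I = (\<lambda>p. integral {p0..p} B)"
  define J where "J = (\<lambda>p. integral {p0..p} (\<lambda>q. a q * I q))"
  define S where "S = integral {p0..0} (\<lambda>q. a q * I q ^ 2)"
  have cI: "continuous_on {p0..0} I" unfolding I_def
    by (rule indefinite_integral_continuous_1[OF integrable_continuous_interval[OF cB]])
  have caI: "continuous_on {p0..0} (\<lambda>q. a q * I q)" by (intro continuous_intros ca cI)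
  have cJ: "continuous_on {p0..0} J" unfolding J_def
    by (rule indefinite_integral_continuous_1[OF integrable_continuous_interval[OF caI]])
  have z0eq: "z 0 p = A p0 * I p" if pp: "p \<in> {p0..0}" for p
  proof -
    have "(B has_integral I p) {p0..p}" unfolding I_def
      by (intro integrable_integral integrable_continuous_interval continuous_on_subset[OF cB sub0[OF pp]])
    then have "((\<lambda>q. A p0 * B q) has_integral A p0 * I p) {p0..p}" by (rule has_integral_mult_right)
    then have "(zd 0 has_integral A p0 * I p) {p0..p}"
      by (rule has_integral_eq[rotated]) (use sub0[OF pp] in \<open>auto simp: zd_eq\<close>)
    then show ?thesis using zint[OF pp, of 0] by (rule has_integral_unique[symmetric])
  qed
  have F0p: "F 0 p = A p0 * J p" if pp: "p \<in> {p0..0}" for p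
  proof -
    have "F 0 p = integral {p0..p} (\<lambda>q. A p0 * (a q * I q))"
      unfolding F_def by (rule integral_cong) (use pp in \<open>auto simp: z0eq\<close>)
    then show ?thesis by (simp add: J_def)
  qed
  have F0eq: "F 0 0 = A p0 * J 0" using F0p[OF end0] .
  have G0eq: "G 0 = A p0 * integral {p0..0} (\<lambda>q. B q * J q)"
  proof -
    have "G 0 = integral {p0..0} (\<lambda>q. A p0 * (B q * J q))"
      unfolding G_def by (rule integral_cong) (auto simp: F0p)
    then show ?thesis by simp
  qed
  have I0: "I 0 = 1 / g" using lam0_eq unfolding I_def B_def a_def by simp
  have Ip0: "I p0 = 0" by (simp add: I_def)
  have ibp: "((\<lambda>q. B q * J q + a q * I q ^ 2) has_integral (I 0 * J 0 - I p0 * J p0)) {p0..0}"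
  proof (rule fundamental_theorem_of_calculus)
    show "p0 \<le> 0" using p0 by simp
    fix x assume x: "x \<in> {p0..0}"
    have dI: "(I has_real_derivative B x) (at x within {p0..0})"
      using integral_has_vector_derivative[OF cB x] unfolding I_def
      by (simp add: has_real_derivative_iff_has_vector_derivative)
    have dJ: "(J has_real_derivative a x * I x) (at x within {p0..0})"
      using integral_has_vector_derivative[OF caI x] unfolding J_def
      by (simp add: has_real_derivative_iff_has_vector_derivative)
    have "((\<lambda>q. I q * J q) has_real_derivative B x * J x + a x * I x ^ 2) (at x within {p0..0})"
      by (rule DERIV_cong[OF DERIV_mult[OF dI dJ]]) (simp add: power2_eq_square algebra_simps)
    then show "((\<lambda>q. I q * J q) has_vector_derivative B x * J x + a x * I x ^ 2) (at x within {p0..0})"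
      by (simp add: has_real_derivative_iff_has_vector_derivative)
  qed
  have cBJ: "continuous_on {p0..0} (\<lambda>q. B q * J q)" by (intro continuous_intros cB cJ)
  have caI2: "continuous_on {p0..0} (\<lambda>q. a q * I q ^ 2)" by (intro continuous_intros ca cI)
  have "integral {p0..0} (\<lambda>q. B q * J q) + S = J 0 / g"
  proof -
    have "integral {p0..0} (\<lambda>q. B q * J q + a q * I q ^ 2) = integral {p0..0} (\<lambda>q. B q * J q) + S"
      unfolding S_def by (rule integral_add; rule integrable_continuous_interval; fact)
    then show ?thesis using integral_unique[OF ibp] I0 Ip0 by simp
  qed
  then have BJ: "integral {p0..0} (\<lambda>q. B q * J q) = J 0 / g - S" by simp
  have Q0: "Q 0 = A p0 * (g * S - \<sigma> / g)"
    unfolding Q_def F0eq G0eq BJ z0eq[OF end0] I0 using g by (simp add: field_simps)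
  have Sst: "integral {p0..0} (\<lambda>p. aa \<gamma> lam0 p * (integral {p0..p} (\<lambda>s. 1 / (aa \<gamma> lam0 s)^3))^2) = S"
    unfolding S_def I_def B_def a_def ..
  have Ap0: "A p0 > 0" using Apos p0 by simp
  have "Q 0 \<le> 0 \<longleftrightarrow> g * S - \<sigma> / g \<le> 0" unfolding Q0 using Ap0 by (simp add: mult_le_0_iff)
  also have "\<dots> \<longleftrightarrow> S \<le> \<sigma> / g^2" using g by (simp add: field_simps power2_eq_square)
  finally have iff: "Q 0 \<le> 0 \<longleftrightarrow> S \<le> \<sigma> / g^2" .
  show ?thesis unfolding Sst using der iff unfolding Xi_def by blast
qed
end
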